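(* Let $k$ be a field and $n\ge2$. Put $A_0=I_n$, $A_i=x^i$ for $1\le i\le n-1$, $B_i=\sum_{j=1}^{n-i-1}jE_{j+1,i+j+1}$ for $0\le i\le n-2$, and $C=\sum_{j=1}^{n-1}jE_{j+1,j}$. Then $$N(\mathrm{J}_n(k))=\begin{cases}\bigoplus_{i=0}^{n-1}kA_i\oplus\bigoplus_{i=0}^{n-2}kB_i & (\mathrm{ch}(k)\nmid n),\\ \bigoplus_{i=0}^{n-1}kA_i\oplus\bigoplus_{i=0}^{n-2}kB_i\oplus kC & (\mathrm{ch}(k)\mid n).\end{cases}$$ In particular $\dim_kN(\mathrm{J}_n(k))=2n-1$ if $\mathrm{ch}(k)\nmid n$ and $2n$ if $\mathrm{ch}(k)\mid n$.
   Context: $x=E_{12}+E_{23}+\cdots+E_{n-1,n}\in\mathrm{M}_n(k)$, where $E_{ij}$ are matrix units, and $\mathrm{J}_n(k)$ is the $k$-subalgebra generated by $x$. For a subalgebra $A\subseteq\mathrm{M}_n(k)$, $N(A)=\{z\in\mathrm{M}_n(k)\mid zy-yz\in A\text{ for all }y\in A\}$. *)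

theory Defs
  imports "Jordan_Normal_Form.Matrix"
begin

(* Matrices are n x n matrices of the JNF type 'a mat; indices are 0-based,
   so the paper's matrix unit E_{p,q} is the entry (p-1, q-1). *)

definition xmat :: "nat \<Rightarrow> 'k::field mat" where
  "xmat n = mat n n (\<lambda>(r, c). if c = r + 1 then 1 else 0)"

definition is_subalgebra :: "nat \<Rightarrow> 'k::field mat set \<Rightarrow> bool" where
  "is_subalgebra n S \<longleftrightarrow> S \<subseteq> carrier_mat n n \<and> 1\<^sub>m n \<in> S \<and> 0\<^sub>m n n \<in> S \<and>
     (\<forall>a\<in>S. \<forall>b\<in>S. a + b \<in> S) \<and> (\<forall>a\<in>S. \<forall>b\<in>S. a * b \<in> S) \<and>
     (\<forall>c. \<forall>a\<in>S. c \<cdot>\<^sub>m a \<in> S)"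

definition Jalg :: "nat \<Rightarrow> 'k::field mat set" where
  "Jalg n = \<Inter> {S. is_subalgebra n S \<and> xmat n \<in> S}"

definition Nrm :: "nat \<Rightarrow> 'k::field mat set \<Rightarrow> 'k mat set" where
  "Nrm n A = {z \<in> carrier_mat n n. \<forall>y\<in>A. z * y - y * z \<in> A}"

definition Amat :: "nat \<Rightarrow> nat \<Rightarrow> 'k::field mat" where
  "Amat n i = xmat n ^\<^sub>m i"

definition Bmat :: "nat \<Rightarrow> nat \<Rightarrow> 'k::field mat" where
  "Bmat n i = mat n n (\<lambda>(r, c). if c = r + i \<and> 1 \<le> r \<and> r \<le> n - i - 1 then of_nat r else 0)"

definition Cmat :: "nat \<Rightarrow> 'k::field mat" where
  "Cmat n = mat n n (\<lambda>(r, c). if r = c + 1 \<and> 1 \<le> r \<and> r \<le> n - 1 then of_nat r else 0)"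

definition lincomb :: "nat \<Rightarrow> (nat \<Rightarrow> 'k::field) \<Rightarrow> (nat \<Rightarrow> 'k) \<Rightarrow> 'k \<Rightarrow> 'k mat" where
  "lincomb n a b c = mat n n (\<lambda>p. (\<Sum>i<n. a i * Amat n i $$ p) + (\<Sum>i<n-1. b i * Bmat n i $$ p) + c * Cmat n $$ p)"

end

theory Submission
  imports Defs
begin


lemma mult_entry:
  assumes "A \<in> carrier_mat n n" "B \<in> carrier_mat n n" "r < n" "c < n"
  shows "(A * B) $$ (r,c) = (\<Sum>k<n. A $$ (r,k) * B $$ (k,c))"
  using assms by (auto simp: scalar_prod_def lessThan_atLeast0 intro!: sum.cong)

lemma xmat_dim[simp]: "dim_row (xmat n) = n" "dim_col (xmat n) = n"
  by (simp_all add: xmat_def)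

lemma xpow_dim[simp]: "dim_row (xmat n ^\<^sub>m k) = n" "dim_col (xmat n ^\<^sub>m k) = n"
  by simp_all

lemma xmat_carrier[simp]: "xmat n \<in> carrier_mat n n"
  by (simp add: xmat_def)

lemma xmat_entry: "r < n \<Longrightarrow> c < n \<Longrightarrow> xmat n $$ (r,c) = (if c = r + 1 then 1 else 0)"
  by (simp add: xmat_def)

lemma zx_entry:
  assumes z: "z \<in> carrier_mat n n" and rc: "r < n" "c < n"
  shows "(z * xmat n) $$ (r,c) = (if 1 \<le> c then z $$ (r, c - 1) else 0)"
proof -
  have "(z * xmat n) $$ (r,c) = (\<Sum>k<n. z $$ (r,k) * xmat n $$ (k,c))"
    by (rule mult_entry[OF z xmat_carrier rc])
  also have "\<dots> = (\<Sum>k<n. if k = c - 1 \<and> 1 \<le> c then z $$ (r,k) else 0)"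
    using rc by (intro sum.cong) (auto simp: xmat_entry)
  also have "\<dots> = (if 1 \<le> c then z $$ (r, c - 1) else 0)"
    using rc by (cases "1 \<le> c") (auto simp: sum.delta')
  finally show ?thesis .
qed

lemma xz_entry:
  assumes z: "z \<in> carrier_mat n n" and rc: "r < n" "c < n"
  shows "(xmat n * z) $$ (r,c) = (if r + 1 < n then z $$ (r + 1, c) else 0)"
proof -
  have "(xmat n * z) $$ (r,c) = (\<Sum>k<n. xmat n $$ (r,k) * z $$ (k,c))"
    by (rule mult_entry[OF xmat_carrier z rc])
  also have "\<dots> = (\<Sum>k<n. if k = r + 1 then z $$ (k,c) else 0)"
    using rc by (intro sum.cong) (auto simp: xmat_entry)
  also have "\<dots> = (if r + 1 < n then z $$ (r + 1, c) else 0)"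
    by (auto simp: sum.delta')
  finally show ?thesis .
qed

lemma xpow_carrier[simp]: "xmat n ^\<^sub>m k \<in> carrier_mat n n"
  by (simp add: pow_mat_dim_square)

lemma xpow_entry: "r < n \<Longrightarrow> c < n \<Longrightarrow> ((xmat n :: 'k::field mat) ^\<^sub>m k) $$ (r,c) = (if c = r + k then 1 else 0)"
proof (induction k arbitrary: c)
  case 0
  then show ?case by (simp add: xmat_def)
next
  case (Suc k)
  have "((xmat n :: 'k mat) ^\<^sub>m Suc k) $$ (r,c) = (xmat n ^\<^sub>m k * xmat n) $$ (r,c)" by simp
  also have "\<dots> = (if 1 \<le> c then ((xmat n :: 'k mat) ^\<^sub>m k) $$ (r, c - 1) else 0)"
    by (rule zx_entry) (use Suc in auto)
  also have "\<dots> = (if c = r + Suc k then 1 else 0)"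
  proof (cases "1 \<le> c")
    case True
    then have "c - 1 < n" using Suc by auto
    then show ?thesis using Suc.IH[of "c - 1"] Suc.prems True by auto
  qed auto
  finally show ?case .
qed

lemma comm_mult:
  fixes z a b :: "'k::field mat"
  assumes "z \<in> carrier_mat n n" "a \<in> carrier_mat n n" "b \<in> carrier_mat n n"
  shows "z * (a * b) - a * b * z = (z * a - a * z) * b + a * (z * b - b * z)"
proof -
  have "(z * a - a * z) * b + a * (z * b - b * z) = (z * a * b - a * z * b) + (a * z * b - a * b * z)"
  proof -
    have "a * (z * b - b * z) = a * (z * b) - a * (b * z)"
      using assms by (intro mult_minus_distrib_mat[of _ n n]) auto
    moreover have "(z * a - a * z) * b = z * a * b - a * z * b"
      using assms by (intro minus_mult_distrib_mat[of _ n n]) auto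
    ultimately show ?thesis using assms by simp
  qed
  also have "\<dots> = z * a * b - a * b * z"
    using assms by (intro eq_matI) auto
  finally show ?thesis using assms by simp
qed

lemma comm_add:
  fixes z a b :: "'k::field mat"
  assumes "z \<in> carrier_mat n n" "a \<in> carrier_mat n n" "b \<in> carrier_mat n n"
  shows "z * (a + b) - (a + b) * z = (z * a - a * z) + (z * b - b * z)"
proof -
  have "z * (a + b) - (a + b) * z = (z * a + z * b) - (a * z + b * z)"
    using assms by (simp add: mult_add_distrib_mat[of _ n n] add_mult_distrib_mat[of _ n n])
  also have "\<dots> = (z * a - a * z) + (z * b - b * z)"
    using assms by (intro eq_matI) auto
  finally show ?thesis .
qed

lemma comm_smult:
  fixes z a :: "'k::field mat"
  assumes "z \<in> carrier_mat n n" "a \<in> carrier_mat n n"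
  shows "z * (c \<cdot>\<^sub>m a) - (c \<cdot>\<^sub>m a) * z = c \<cdot>\<^sub>m (z * a - a * z)"
  using assms by (intro eq_matI) (auto simp: mult_smult_distrib[of _ n n] mult_smult_assoc_mat[of _ n n] algebra_simps)



definition toep :: "nat \<Rightarrow> (nat \<Rightarrow> 'k::field) \<Rightarrow> 'k mat" where
  "toep n f = mat n n (\<lambda>(r,c). if r \<le> c then f (c - r) else 0)"

lemma toep_dim[simp]: "dim_row (toep n f) = n" "dim_col (toep n f) = n"
  by (simp_all add: toep_def)

lemma toep_carrier[simp]: "toep n f \<in> carrier_mat n n"
  by (simp add: toep_def)

lemma toep_entry: "r < n \<Longrightarrow> c < n \<Longrightarrow> toep n f $$ (r,c) = (if r \<le> c then f (c - r) else 0)"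
  by (simp add: toep_def)

lemma toep_eqI:
  assumes "A \<in> carrier_mat n n" "\<And>r c. r < n \<Longrightarrow> c < n \<Longrightarrow> A $$ (r,c) = (if r \<le> c then f (c - r) else 0)"
  shows "A = toep n f"
  using assms by (intro eq_matI) (auto simp: toep_entry)

lemma toep_mult: "toep n f * toep n g = toep n (\<lambda>d. \<Sum>j\<le>d. f j * g (d - j))"
proof (rule toep_eqI)
  show "toep n f * toep n g \<in> carrier_mat n n" by (rule mult_carrier_mat[OF toep_carrier toep_carrier])
  fix r c assume rc: "r < n" "c < n"
  have "(toep n f * toep n g) $$ (r,c) = (\<Sum>k<n. toep n f $$ (r,k) * toep n g $$ (k,c))"
    by (rule mult_entry) (use rc in auto)
  also have "\<dots> = (\<Sum>k<n. if k \<in> {r..c} then f (k - r) * g (c - k) else 0)"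
    using rc by (intro sum.cong) (auto simp: toep_entry)
  also have "\<dots> = (\<Sum>k\<in>{..<n} \<inter> {r..c}. f (k - r) * g (c - k))"
    by (rule sum.inter_restrict[OF finite_lessThan, symmetric])
  also have "\<dots> = (\<Sum>k\<in>{r..c}. f (k - r) * g (c - k))"
  proof -
    have "{..<n} \<inter> {r..c} = {r..c}" using rc by (intro Int_absorb1) (auto simp: subset_iff)
    then show ?thesis by (simp only:)
  qed
  finally have eq: "(toep n f * toep n g) $$ (r,c) = (\<Sum>k\<in>{r..c}. f (k - r) * g (c - k))" .
  show "(toep n f * toep n g) $$ (r,c) = (if r \<le> c then (\<Sum>j\<le>c - r. f j * g (c - r - j)) else 0)"
  proof (cases "r \<le> c")
    case True
    have "(\<Sum>k\<in>{r..c}. f (k - r) * g (c - k)) = (\<Sum>k\<in>{0 + r..(c - r) + r}. f (k - r) * g (c - k))"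
      using True by simp
    also have "\<dots> = (\<Sum>j\<in>{0..c - r}. f (j + r - r) * g (c - (j + r)))"
      by (rule sum.shift_bounds_cl_nat_ivl)
    also have "\<dots> = (\<Sum>j\<le>c - r. f j * g (c - r - j))"
      unfolding atMost_atLeast0 by (intro sum.cong refl) (simp add: add.commute)
    finally show ?thesis using eq True by simp
  next
    case False
    then show ?thesis using eq by simp
  qed
qed

lemma toep_add: "toep n f + toep n g = toep n (\<lambda>d. f d + g d)"
  by (intro eq_matI) (auto simp: toep_entry)

lemma toep_smult: "c \<cdot>\<^sub>m toep n f = toep n (\<lambda>d. c * f d)"
  by (intro eq_matI) (auto simp: toep_entry)

lemma toep_one: "1\<^sub>m n = toep n (\<lambda>d. if d = 0 then 1 else 0)"
  by (intro eq_matI) (auto simp: toep_entry)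

lemma toep_zero: "0\<^sub>m n n = toep n (\<lambda>d. 0)"
  by (intro eq_matI) (auto simp: toep_entry)

lemma toep_x: "xmat n = toep n (\<lambda>d. if d = 1 then 1 else 0)"
  by (intro eq_matI) (auto simp: toep_entry xmat_entry)

lemma toep_xpow: "(xmat n :: 'k::field mat) ^\<^sub>m k = toep n (\<lambda>d. if d = k then 1 else 0)"
  by (intro eq_matI) (auto simp: toep_entry xpow_entry)

lemma toep_subalg: "is_subalgebra n (range (toep n) :: 'k::field mat set)"
  unfolding is_subalgebra_def
proof (intro conjI ballI allI)
  show "range (toep n) \<subseteq> carrier_mat n n" by auto
  show "1\<^sub>m n \<in> range (toep n)" unfolding toep_one by (rule rangeI)
  show "0\<^sub>m n n \<in> range (toep n)" unfolding toep_zero by (rule rangeI)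
  fix a b :: "'k mat" assume a: "a \<in> range (toep n)" and b: "b \<in> range (toep n)"
  from a obtain f where f: "a = toep n f" by (rule rangeE)
  from b obtain g where g: "b = toep n g" by (rule rangeE)
  show "a + b \<in> range (toep n)" unfolding f g toep_add by (rule rangeI)
  show "a * b \<in> range (toep n)" unfolding f g toep_mult by (rule rangeI)
next
  fix c :: 'k and a :: "'k mat" assume a: "a \<in> range (toep n)"
  from a obtain f where f: "a = toep n f" by (rule rangeE)
  show "c \<cdot>\<^sub>m a \<in> range (toep n)" unfolding f toep_smult by (rule rangeI)
qed

lemma subalg_props:
  assumes "is_subalgebra n S"
  shows "1\<^sub>m n \<in> S" "0\<^sub>m n n \<in> S" "a \<in> S \<Longrightarrow> b \<in> S \<Longrightarrow> a + b \<in> S"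
    "a \<in> S \<Longrightarrow> b \<in> S \<Longrightarrow> a * b \<in> S" "a \<in> S \<Longrightarrow> c \<cdot>\<^sub>m a \<in> S"
    "S \<subseteq> carrier_mat n n"
  using assms unfolding is_subalgebra_def by blast+

lemma toep_in_subalg:
  assumes S: "is_subalgebra n (S :: 'k::field mat set)" and x: "xmat n \<in> S"
  shows "toep n f \<in> S"
proof -
  have pw: "(xmat n :: 'k mat) ^\<^sub>m k \<in> S" for k
  proof (induction k)
    case 0
    have "(xmat n :: 'k mat) ^\<^sub>m 0 = 1\<^sub>m n" by simp
    then show ?case using subalg_props(1)[OF S] by simp
  next
    case (Suc k)
    have "(xmat n :: 'k mat) ^\<^sub>m Suc k = xmat n ^\<^sub>m k * xmat n" by simp
    then show ?case using subalg_props(4)[OF S Suc x] by simp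
  qed
  have ind: "toep n (\<lambda>d. if d < m then f d else 0) \<in> S" for m
  proof (induction m)
    case 0
    have "toep n (\<lambda>d. if d < 0 then f d else 0) = 0\<^sub>m n n"
      by (simp add: toep_zero)
    then show ?case using subalg_props(2)[OF S] by simp
  next
    case (Suc m)
    have "toep n (\<lambda>d. if d < Suc m then f d else 0) =
          toep n (\<lambda>d. if d < m then f d else 0) + f m \<cdot>\<^sub>m ((xmat n :: 'k mat) ^\<^sub>m m)"
    proof (intro eq_matI)
      fix i j assume ij: "i < dim_row (toep n (\<lambda>d. if d < m then f d else 0) + f m \<cdot>\<^sub>m ((xmat n :: 'k mat) ^\<^sub>m m))"
        "j < dim_col (toep n (\<lambda>d. if d < m then f d else 0) + f m \<cdot>\<^sub>m ((xmat n :: 'k mat) ^\<^sub>m m))"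
      then have i: "i < n" and j: "j < n" by (auto split: if_splits)
      show "toep n (\<lambda>d. if d < Suc m then f d else 0) $$ (i, j) =
        (toep n (\<lambda>d. if d < m then f d else 0) + f m \<cdot>\<^sub>m ((xmat n :: 'k mat) ^\<^sub>m m)) $$ (i, j)"
        using i j by (cases "i \<le> j"; cases "j = i + m") (auto simp: toep_entry xpow_entry)
    qed auto
    moreover have "toep n (\<lambda>d. if d < m then f d else 0) + f m \<cdot>\<^sub>m ((xmat n :: 'k mat) ^\<^sub>m m) \<in> S"
      by (intro subalg_props(3)[OF S] subalg_props(5)[OF S] Suc pw)
    ultimately show ?case by simp
  qed
  have eq: "toep n f = toep n (\<lambda>d. if d < n then f d else 0)"
    by (intro eq_matI) (auto simp: toep_entry)
  show ?thesis by (subst eq) (rule ind)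
qed

lemma Jalg_eq: "Jalg n = (range (toep n) :: 'k::field mat set)"
proof
  show "(Jalg n :: 'k mat set) \<subseteq> range (toep n)"
  proof -
    have mem: "range (toep n) \<in> {S. is_subalgebra n S \<and> (xmat n :: 'k mat) \<in> S}"
      using toep_subalg[of n] toep_x[of n] by (metis (mono_tags, lifting) mem_Collect_eq rangeI)
    have "\<Inter> {S. is_subalgebra n S \<and> (xmat n :: 'k mat) \<in> S} \<subseteq> range (toep n)"
      by (rule Inter_lower[OF mem])
    then show ?thesis by (simp only: Jalg_def)
  qed
  show "range (toep n) \<subseteq> (Jalg n :: 'k mat set)"
  proof
    fix y :: "'k mat" assume "y \<in> range (toep n)"
    then obtain f where y: "y = toep n f" by (rule rangeE)
    show "y \<in> Jalg n" unfolding Jalg_def y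
    proof (rule InterI)
      fix S assume "S \<in> {S. is_subalgebra n S \<and> (xmat n :: 'k mat) \<in> S}"
      then show "toep n f \<in> S" by (intro toep_in_subalg[of n S f]) auto
    qed
  qed
qed

lemma Jalg_subalg: "is_subalgebra n (Jalg n :: 'k::field mat set)"
  unfolding Jalg_eq by (rule toep_subalg)

lemma x_in_Jalg: "xmat n \<in> Jalg n"
  unfolding Jalg_eq toep_x by (rule rangeI)



lemma Jalg_carrier: "y \<in> Jalg n \<Longrightarrow> y \<in> carrier_mat n n"
  using subalg_props(6)[OF Jalg_subalg] by blast

lemma Nrm_iff:
  fixes z :: "'k::field mat"
  shows "z \<in> Nrm n (Jalg n) \<longleftrightarrow> z \<in> carrier_mat n n \<and> z * xmat n - xmat n * z \<in> Jalg n"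
proof
  assume "z \<in> Nrm n (Jalg n)"
  then show "z \<in> carrier_mat n n \<and> z * xmat n - xmat n * z \<in> Jalg n"
    unfolding Nrm_def using x_in_Jalg[of n] by blast
next
  assume asm: "z \<in> carrier_mat n n \<and> z * xmat n - xmat n * z \<in> Jalg n"
  then have z: "z \<in> carrier_mat n n" and zx: "z * xmat n - xmat n * z \<in> Jalg n" by auto
  define S' where "S' = {y \<in> Jalg n. z * y - y * z \<in> Jalg n}"
  have J: "is_subalgebra n (Jalg n :: 'k mat set)" by (rule Jalg_subalg)
  have sub: "is_subalgebra n S'"
    unfolding is_subalgebra_def
  proof (intro conjI ballI allI)
    show "S' \<subseteq> carrier_mat n n" unfolding S'_def using Jalg_carrier by blast
    have "z * 1\<^sub>m n - 1\<^sub>m n * z = 0\<^sub>m n n"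
      using z by (simp add: right_mult_one_mat left_mult_one_mat)
    then show "1\<^sub>m n \<in> S'" unfolding S'_def using subalg_props(1,2)[OF J] by simp
    have "z * 0\<^sub>m n n - 0\<^sub>m n n * z = 0\<^sub>m n n"
      using z by (simp add: right_mult_zero_mat left_mult_zero_mat)
    then show "0\<^sub>m n n \<in> S'" unfolding S'_def using subalg_props(2)[OF J] by simp
  next
    fix a b assume a: "a \<in> S'" and b: "b \<in> S'"
    then have aJ: "a \<in> Jalg n" and bJ: "b \<in> Jalg n" and ca: "z * a - a * z \<in> Jalg n"
      and cb: "z * b - b * z \<in> Jalg n" unfolding S'_def by auto
    have ac: "a \<in> carrier_mat n n" and bc: "b \<in> carrier_mat n n"
      using aJ bJ Jalg_carrier by auto
    show "a + b \<in> S'" unfolding S'_def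
      using comm_add[OF z ac bc] subalg_props(3)[OF J aJ bJ] subalg_props(3)[OF J ca cb] by simp
    have "(z * a - a * z) * b \<in> Jalg n" by (rule subalg_props(4)[OF J ca bJ])
    moreover have "a * (z * b - b * z) \<in> Jalg n" by (rule subalg_props(4)[OF J aJ cb])
    ultimately show "a * b \<in> S'" unfolding S'_def
      using comm_mult[OF z ac bc] subalg_props(3)[OF J] subalg_props(4)[OF J aJ bJ] by simp
  next
    fix c a assume a: "a \<in> S'"
    then have aJ: "a \<in> Jalg n" and ca: "z * a - a * z \<in> Jalg n" unfolding S'_def by auto
    have ac: "a \<in> carrier_mat n n" using aJ Jalg_carrier by auto
    show "c \<cdot>\<^sub>m a \<in> S'" unfolding S'_def
      using comm_smult[OF z ac, of c] subalg_props(5)[OF J aJ] subalg_props(5)[OF J ca] by simp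
  qed
  have xS: "xmat n \<in> S'" unfolding S'_def using x_in_Jalg zx by simp
  have "S' \<in> {S. is_subalgebra n S \<and> (xmat n :: 'k mat) \<in> S}" using sub xS by simp
  then have "\<Inter> {S. is_subalgebra n S \<and> (xmat n :: 'k mat) \<in> S} \<subseteq> S'" by (rule Inter_lower)
  then have JS: "Jalg n \<subseteq> S'" by (simp only: Jalg_def)
  show "z \<in> Nrm n (Jalg n)" unfolding Nrm_def
  proof (intro CollectI conjI ballI)
    show "z \<in> carrier_mat n n" by (rule z)
    fix y :: "'k mat" assume "y \<in> Jalg n"
    then have "y \<in> S'" using JS by blast
    then show "z * y - y * z \<in> Jalg n" unfolding S'_def by simp
  qed
qed

lemma D_entry:
  assumes z: "z \<in> carrier_mat n n" and rc: "r < n" "c < n"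
  shows "(z * xmat n - xmat n * z) $$ (r,c) =
     (if 1 \<le> c then z $$ (r, c - 1) else 0) - (if r + 1 < n then z $$ (r + 1, c) else 0)"
proof -
  have d: "dim_row (xmat n * z) = n" "dim_col (xmat n * z) = n" using z by auto
  show ?thesis using rc d zx_entry[OF z rc] xz_entry[OF z rc] by simp
qed

lemma D_carrier: "z \<in> carrier_mat n n \<Longrightarrow> z * xmat n - xmat n * z \<in> carrier_mat n n"
  unfolding carrier_mat_def by simp

lemma Bmat_entry: "r < n \<Longrightarrow> c < n \<Longrightarrow> Bmat n i $$ (r,c) =
   (if c = r + i \<and> 1 \<le> r \<and> r \<le> n - i - 1 then of_nat r else 0)"
  by (simp add: Bmat_def)

lemma Cmat_entry: "r < n \<Longrightarrow> c < n \<Longrightarrow> Cmat n $$ (r,c) =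
   (if r = c + 1 \<and> 1 \<le> r \<and> r \<le> n - 1 then of_nat r else 0)"
  by (simp add: Cmat_def)

definition Lf :: "nat \<Rightarrow> (nat \<Rightarrow> 'k::field) \<Rightarrow> (nat \<Rightarrow> 'k) \<Rightarrow> 'k \<Rightarrow> nat \<Rightarrow> nat \<Rightarrow> 'k" where
  "Lf n a b cc r c = (if r \<le> c then a (c - r) + (if c - r < n - 1 then of_nat r * b (c - r) else 0)
      else if r = c + 1 then of_nat r * cc else 0)"

lemma lincomb_dim[simp]: "dim_row (lincomb n a b cc) = n" "dim_col (lincomb n a b cc) = n"
  by (simp_all add: lincomb_def)

lemma lincomb_carrier: "lincomb n a b cc \<in> carrier_mat n n"
  unfolding carrier_mat_def by simp

lemma lincomb_entry:
  assumes rc: "r < n" "c < n"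
  shows "lincomb n a b cc $$ (r,c) = Lf n a b cc r c"
proof -
  have A: "(\<Sum>i<n. a i * Amat n i $$ (r,c)) = (if r \<le> c then a (c - r) else 0)"
  proof -
    have "(\<Sum>i<n. a i * Amat n i $$ (r,c)) = (\<Sum>i<n. if i = c - r \<and> r \<le> c then a i else 0)"
      using rc by (intro sum.cong refl) (auto simp: Amat_def xpow_entry)
    also have "\<dots> = (if r \<le> c then a (c - r) else 0)"
      using rc by (cases "r \<le> c") (auto simp: sum.delta')
    finally show ?thesis .
  qed
  have B: "(\<Sum>i<n-1. b i * Bmat n i $$ (r,c)) = (if r \<le> c \<and> c - r < n - 1 then of_nat r * b (c - r) else 0)"
  proof -
    have "(\<Sum>i<n-1. b i * Bmat n i $$ (r,c)) = (\<Sum>i<n-1. if i = c - r \<and> r \<le> c then of_nat r * b i else 0)"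
      using rc by (intro sum.cong refl) (cases "r = 0"; auto simp: Bmat_entry)
    also have "\<dots> = (if r \<le> c \<and> c - r < n - 1 then of_nat r * b (c - r) else 0)"
      using rc by (cases "r \<le> c") (auto simp: sum.delta')
    finally show ?thesis .
  qed
  have C: "cc * Cmat n $$ (r,c) = (if r = c + 1 then of_nat r * cc else 0)"
    using rc by (auto simp: Cmat_entry)
  show ?thesis
    using rc A B C by (simp add: lincomb_def Lf_def)
qed



lemma subset_dir:
  fixes z :: "'k::field mat"
  assumes n2: "2 \<le> n" and z: "z \<in> carrier_mat n n" and D: "z * xmat n - xmat n * z = toep n t"
  shows "z = lincomb n (\<lambda>i. z $$ (0,i)) (\<lambda>i. z $$ (1,1+i) - z $$ (0,i)) (z $$ (1,0))"
    and "of_nat n * t 0 = 0" and "z $$ (1,0) = - t 0"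
proof -
  have E: "(if 1 \<le> c then z $$ (r, c - 1) else 0) - (if r + 1 < n then z $$ (r + 1, c) else 0)
        = (if r \<le> c then t (c - r) else 0)" if "r < n" "c < n" for r c
    using D_entry[OF z that] D toep_entry[OF that, of t] by simp
  have F1: "z $$ (r, r + d) = z $$ (0, d) - of_nat r * t (d + 1)" if "r + d < n" for r d
    using that
  proof (induction r)
    case 0
    then show ?case by simp
  next
    case (Suc r)
    have "z $$ (r, r + d) - z $$ (r + 1, r + d + 1) = t (d + 1)"
      using E[of r "r + d + 1"] Suc.prems by simp
    then show ?case using Suc by (simp add: algebra_simps)
  qed
  have F2: "z $$ (r + 1, r) = - of_nat (r + 1) * t 0" if "r + 1 < n" for r
    using that
  proof (induction r)
    case 0
    then show ?case using E[of 0 0] by (simp add: equation_minus_iff)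
  next
    case (Suc r)
    have "z $$ (r + 1, r) - z $$ (r + 2, r + 1) = t 0"
      using E[of "r + 1" "r + 1"] Suc.prems by simp
    then show ?case using Suc by (simp add: algebra_simps eq_neg_iff_add_eq_0)
  qed
  have F4: "z $$ (r, c) = 0" if "c + 2 \<le> r" "r < n" for r c
    using that
  proof (induction c arbitrary: r)
    case 0
    then show ?case using E[of "r - 1" 0] by simp
  next
    case (Suc c)
    have "z $$ (r - 1, c) = 0" using Suc by simp
    moreover have "z $$ (r - 1, c) - z $$ (r, Suc c) = 0"
      using E[of "r - 1" "Suc c"] Suc.prems by simp
    ultimately show ?case by simp
  qed
  obtain m where m: "n = m + 2" using n2 by (metis add.commute le_Suc_ex)
  have last: "z $$ (m + 1, m) = t 0"
    using E[of "m + 1" "m + 1"] m by simp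
  have "z $$ (m + 1, m) = - of_nat (m + 1) * t 0" using F2[of m] m by simp
  then have "t 0 = - of_nat (m + 1) * t 0" using last by simp
  then show "of_nat n * t 0 = 0" using m by (simp add: algebra_simps eq_neg_iff_add_eq_0)
  show z10: "z $$ (1,0) = - t 0" using F2[of 0] n2 by simp
  show "z = lincomb n (\<lambda>i. z $$ (0,i)) (\<lambda>i. z $$ (1,1+i) - z $$ (0,i)) (z $$ (1,0))"
  proof (rule eq_matI)
    fix r c assume "r < dim_row (lincomb n (\<lambda>i. z $$ (0,i)) (\<lambda>i. z $$ (1,1+i) - z $$ (0,i)) (z $$ (1,0)))"
      "c < dim_col (lincomb n (\<lambda>i. z $$ (0,i)) (\<lambda>i. z $$ (1,1+i) - z $$ (0,i)) (z $$ (1,0)))"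
    then have rc: "r < n" "c < n" by auto
    have "z $$ (r, c) = Lf n (\<lambda>i. z $$ (0,i)) (\<lambda>i. z $$ (1,1+i) - z $$ (0,i)) (z $$ (1,0)) r c"
    proof (cases "r \<le> c")
      case True
      define d where "d = c - r"
      have c: "c = r + d" using True d_def by simp
      have zrc: "z $$ (r, c) = z $$ (0, d) - of_nat r * t (d + 1)" using F1[of r d] rc c by simp
      show ?thesis
      proof (cases "d < n - 1")
        case True
        have "z $$ (1, 1 + d) = z $$ (0, d) - t (d + 1)" using F1[of 1 d] True by simp
        then have hb: "z $$ (1, 1 + d) - z $$ (0, d) = - t (d + 1)" by simp
        have "Lf n (\<lambda>i. z $$ (0,i)) (\<lambda>i. z $$ (1,1+i) - z $$ (0,i)) (z $$ (1,0)) r c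
            = z $$ (0, d) + of_nat r * (z $$ (1, 1 + d) - z $$ (0, d))"
          using True c by (simp add: Lf_def)
        also have "\<dots> = z $$ (0, d) - of_nat r * t (d + 1)" by (simp only: hb) simp
        finally show ?thesis using zrc by simp
      next
        case False
        then have "r = 0" using rc c by simp
        then show ?thesis using zrc c False by (simp add: Lf_def)
      qed
    next
      case False
      show ?thesis
      proof (cases "r = c + 1")
        case True
        then show ?thesis using F2[of c] rc z10 False by (simp add: Lf_def algebra_simps)
      next
        case False2: False
        then show ?thesis using F4[of c r] rc False by (simp add: Lf_def)
      qed
    qed
    then show "z $$ (r, c) = lincomb n (\<lambda>i. z $$ (0,i)) (\<lambda>i. z $$ (1,1+i) - z $$ (0,i)) (z $$ (1,0)) $$ (r, c)"
      by (subst lincomb_entry[OF rc]) simp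
  qed (use z in auto)
qed

lemma supset_dir:
  fixes cc :: "'k::field"
  assumes n2: "2 \<le> n" and ncc: "of_nat n * cc = 0"
  shows "lincomb n a b cc \<in> Nrm n (Jalg n)"
proof -
  let ?z = "lincomb n a b cc"
  define tt where "tt = (\<lambda>d. if d = 0 then - cc else - b (d - 1))"
  have z: "?z \<in> carrier_mat n n" by (rule lincomb_carrier)
  have "?z * xmat n - xmat n * ?z = toep n tt"
  proof (rule toep_eqI)
    show "?z * xmat n - xmat n * ?z \<in> carrier_mat n n" by (rule D_carrier[OF z])
    fix r c assume rc: "r < n" "c < n"
    have De: "(?z * xmat n - xmat n * ?z) $$ (r,c) =
     (if 1 \<le> c then Lf n a b cc r (c - 1) else 0) - (if r + 1 < n then Lf n a b cc (r + 1) c else 0)"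
    proof -
      have l1: "?z $$ (r, c - 1) = Lf n a b cc r (c - 1)" by (rule lincomb_entry) (use rc in auto)
      have l2: "r + 1 < n \<Longrightarrow> ?z $$ (r + 1, c) = Lf n a b cc (r + 1) c" by (rule lincomb_entry) (use rc in auto)
      show ?thesis using D_entry[OF z rc] l1 l2 by auto
    qed
    show "(?z * xmat n - xmat n * ?z) $$ (r,c) = (if r \<le> c then tt (c - r) else 0)"
    proof -
      consider (lt) "r < c" | (eq) "r = c" | (gt) "c < r" by linarith
      then show ?thesis
      proof cases
        case lt
        then have "c - 1 - r = c - r - 1" "c - r - 1 < n - 1" "c - r \<noteq> 0" "r + 1 < n" "1 \<le> c"
          "r \<le> c - 1" "r + 1 \<le> c" using rc by auto
        then show ?thesis unfolding De using lt by (simp add: Lf_def tt_def algebra_simps)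
      next
        case eq
        show ?thesis
        proof (cases "c = 0")
          case True
          then show ?thesis unfolding De using eq n2 by (simp add: Lf_def tt_def)
        next
          case c0: False
          show ?thesis
          proof (cases "c + 1 < n")
            case True
            have "\<not> c \<le> c - Suc 0" using c0 by simp
            then show ?thesis unfolding De using eq c0 True by (simp add: Lf_def tt_def algebra_simps)
          next
            case False
            then have "c = n - 1" using rc by simp
            then have nc: "n = c + 1" using n2 by simp
            have "(of_nat c + 1) * cc = 0" using ncc unfolding nc by (simp add: add.commute)
            then have "of_nat c * cc = - cc" by (simp add: algebra_simps eq_neg_iff_add_eq_0)
            moreover have "\<not> c \<le> c - Suc 0" using c0 by simp
            ultimately show ?thesis unfolding De using eq c0 False by (simp add: Lf_def tt_def)
          qed
        qed
      next
        case gt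
        moreover have "\<not> r \<le> c - Suc 0" using gt by simp
        ultimately show ?thesis unfolding De by (simp add: Lf_def)
      qed
    qed
  qed
  then have "?z * xmat n - xmat n * ?z \<in> Jalg n" by (simp add: Jalg_eq)
  then show ?thesis using Nrm_iff z by blast
qed

lemma indep:
  assumes n2: "2 \<le> n" and L: "lincomb n a b cc = (0\<^sub>m n n :: 'k::field mat)"
  shows "(\<forall>i<n. a i = 0) \<and> (\<forall>i<n-1. b i = 0) \<and> cc = 0"
proof -
  have e: "Lf n a b cc r c = 0" if "r < n" "c < n" for r c
    using lincomb_entry[OF that, of a b cc] L that by simp
  have a: "a i = 0" if "i < n" for i using e[of 0 i] that by (simp add: Lf_def split: if_splits)
  have b: "b i = 0" if "i < n - 1" for i using e[of 1 "1 + i"] that a[of i] by (simp add: Lf_def)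
  have c: "cc = 0" using e[of 1 0] n2 by (simp add: Lf_def)
  show ?thesis using a b c by auto
qed


theorem proposition4p21:
  fixes n :: nat
  assumes "n \<ge> 2"
  shows "(\<not> CHAR('k::field) dvd n \<longrightarrow>
            Nrm n (Jalg n :: 'k mat set) = {lincomb n a b 0 | a b. True} \<and>
            (\<forall>a b. lincomb n a b (0::'k) = 0\<^sub>m n n \<longrightarrow> (\<forall>i<n. a i = 0) \<and> (\<forall>i<n-1. b i = 0)))
       \<and> (CHAR('k) dvd n \<longrightarrow>
            Nrm n (Jalg n :: 'k mat set) = {lincomb n a b c | a b c. True} \<and>
            (\<forall>a b c. lincomb n a b (c::'k) = 0\<^sub>m n n \<longrightarrow> (\<forall>i<n. a i = 0) \<and> (\<forall>i<n-1. b i = 0) \<and> c = 0))"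
proof -
  have n2: "2 \<le> n" using assms by simp
  have sub: "\<exists>t. z \<in> carrier_mat n n \<and> z * xmat n - xmat n * z = toep n t"
    if "z \<in> Nrm n (Jalg n :: 'k mat set)" for z :: "'k mat"
  proof -
    have "z \<in> carrier_mat n n" "z * xmat n - xmat n * z \<in> range (toep n)"
      using that Nrm_iff[of z n] Jalg_eq[of n] by auto
    then show ?thesis by blast
  qed
  show ?thesis
  proof (intro conjI impI)
    assume nd: "\<not> CHAR('k) dvd n"
    have nz: "(of_nat n :: 'k) \<noteq> 0" using nd by (simp add: of_nat_eq_0_iff_char_dvd)
    show "Nrm n (Jalg n :: 'k mat set) = {lincomb n a b 0 | a b. True}"
    proof (intro equalityI subsetI)
      fix z :: "'k mat" assume "z \<in> Nrm n (Jalg n)"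
      then obtain t where z: "z \<in> carrier_mat n n" and D: "z * xmat n - xmat n * z = toep n t"
        using sub by blast
      have "of_nat n * t 0 = 0" by (rule subset_dir(2)[OF n2 z D])
      then have "t 0 = 0" using nz by simp
      then have "z $$ (1,0) = 0" using subset_dir(3)[OF n2 z D] by simp
      then have "z = lincomb n (\<lambda>i. z $$ (0,i)) (\<lambda>i. z $$ (1,1+i) - z $$ (0,i)) 0"
        using subset_dir(1)[OF n2 z D] by simp
      then show "z \<in> {lincomb n a b 0 | a b. True}" by blast
    next
      fix z :: "'k mat" assume "z \<in> {lincomb n a b 0 | a b. True}"
      then obtain a b where "z = lincomb n a b 0" by blast
      then show "z \<in> Nrm n (Jalg n)" using supset_dir[OF n2, of 0 a b] by simp
    qed
    show "\<forall>a b. lincomb n a b (0::'k) = 0\<^sub>m n n \<longrightarrow> (\<forall>i<n. a i = 0) \<and> (\<forall>i<n-1. b i = 0)"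
      using indep[OF n2] by blast
  next
    assume dv: "CHAR('k) dvd n"
    have nz: "(of_nat n :: 'k) = 0" using dv by (simp add: of_nat_eq_0_iff_char_dvd)
    show "Nrm n (Jalg n :: 'k mat set) = {lincomb n a b c | a b c. True}"
    proof (intro equalityI subsetI)
      fix z :: "'k mat" assume "z \<in> Nrm n (Jalg n)"
      then obtain t where z: "z \<in> carrier_mat n n" and D: "z * xmat n - xmat n * z = toep n t"
        using sub by blast
      have "z = lincomb n (\<lambda>i. z $$ (0,i)) (\<lambda>i. z $$ (1,1+i) - z $$ (0,i)) (z $$ (1,0))"
        by (rule subset_dir(1)[OF n2 z D])
      then show "z \<in> {lincomb n a b c | a b c. True}" by blast
    next
      fix z :: "'k mat" assume "z \<in> {lincomb n a b c | a b c. True}"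
      then obtain a b c where "z = lincomb n a b c" by blast
      then show "z \<in> Nrm n (Jalg n)" using supset_dir[OF n2, of c a b] nz by simp
    qed
    show "\<forall>a b c. lincomb n a b (c::'k) = 0\<^sub>m n n \<longrightarrow> (\<forall>i<n. a i = 0) \<and> (\<forall>i<n-1. b i = 0) \<and> c = 0"
      using indep[OF n2] by blast
  qed
qed

end
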